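(* Let $G$ be a countable residually finite group, $r>1$ an integer, and let $\eta\in\{1,\dots,r\}^G$ and $(\Gamma_n)_{n\ge1}$ be as constructed below. Then $(\Gamma_n)_{n\ge1}$ is a period structure for $\eta$; in particular each $\Gamma_n$ is an essential group of periods of $\eta$.
   Context: Setting: $(\Gamma_i)_{i\ge1}$ is a strictly decreasing sequence of finite index normal subgroups of $G$ with $\bigcap_i\Gamma_i=\{1_G\}$; put $\Gamma_0=G$. $(D_i)_{i\ge0}$ are finite subsets of $G$ with $D_0=\{1_G\}$, $D_i$ containing exactly one element of each coset of $\Gamma_i$, $1_G\in D_i\subseteq D_{i+1}$, $G=\bigcup_iD_i$, and $D_j=\bigcup_{v\in D_j\cap\Gamma_i}vD_i$ for $j>i\ge1$; also $[G:\Gamma_i]\ge3$ and $[\Gamma_i:\Gamma_{i+1}]\ge3$. Let $\Sigma=\{1,\dots,r\}$ and for $m\ge0$ let $\alpha_m\in\Sigma$ with $\alpha_m\equiv m\pmod r$. Put $J(0)=\{1_G\}$ and $J(m)=D_m\setminus\bigcup_{i=0}^{m-1}J(i)\Gamma_{i+1}$ for $m\ge1$; the sets $J(m)\Gamma_{m+1}$ ($m\ge0$) partition $G$, and $\eta(hg)=\alpha_{m+1}$ for $h\in J(m)$, $g\in\Gamma_{m+1}$. Shift: $\sigma^gx(h)=x(g^{-1}h)$. $\mathrm{Per}(x,\Gamma,\alpha)=\{g: x(\gamma g)=\alpha\ \forall\gamma\in\Gamma\}$, $\mathrm{Per}(x,\Gamma)=\bigcup_\alpha\mathrm{Per}(x,\Gamma,\alpha)$.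 A finite index $\Gamma$ is a group of periods of $\eta$ if $\mathrm{Per}(\eta,\Gamma)\ne\emptyset$, essential if $\mathrm{Per}(\eta,\Gamma,\alpha)\subseteq\mathrm{Per}(\sigma^g\eta,\Gamma,\alpha)$ for every $\alpha\in\Sigma$ implies $g\in\Gamma$. A period structure is a nested sequence of essential groups of periods $(\Gamma_n)$ with $G=\bigcup_n\mathrm{Per}(\eta,\Gamma_n)$. *)

theory Defs
  imports "HOL-Algebra.Algebra"
begin

definition residually_finite :: "('a, 'b) monoid_scheme \<Rightarrow> bool" where
  "residually_finite G \<longleftrightarrow>
     (\<forall>g \<in> carrier G. g \<noteq> \<one>\<^bsub>G\<^esub> \<longrightarrow>
        (\<exists>H. H \<lhd> G \<and> finite (rcosets\<^bsub>G\<^esub> H) \<and> g \<notin> H))"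

definition Sigma :: "nat \<Rightarrow> nat set" where
  "Sigma r = {1..r}"

definition alpha :: "nat \<Rightarrow> nat \<Rightarrow> nat" where
  "alpha r m = (if m mod r = 0 then r else m mod r)"

primrec Jlist :: "('a, 'b) monoid_scheme \<Rightarrow> (nat \<Rightarrow> 'a set) \<Rightarrow> (nat \<Rightarrow> 'a set) \<Rightarrow> nat \<Rightarrow> 'a set list" where
  "Jlist G \<Gamma> D 0 = [{\<one>\<^bsub>G\<^esub>}]"
| "Jlist G \<Gamma> D (Suc m) = Jlist G \<Gamma> D m @
     [D (Suc m) - (\<Union>i\<le>m. (Jlist G \<Gamma> D m ! i) <#>\<^bsub>G\<^esub> \<Gamma> (Suc i))]"

definition J :: "('a, 'b) monoid_scheme \<Rightarrow> (nat \<Rightarrow> 'a set) \<Rightarrow> (nat \<Rightarrow> 'a set) \<Rightarrow> nat \<Rightarrow> 'a set" where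
  "J G \<Gamma> D m = Jlist G \<Gamma> D m ! m"

definition eta :: "('a, 'b) monoid_scheme \<Rightarrow> (nat \<Rightarrow> 'a set) \<Rightarrow> (nat \<Rightarrow> 'a set) \<Rightarrow> nat \<Rightarrow> 'a \<Rightarrow> nat" where
  "eta G \<Gamma> D r x = (THE a. \<exists>m. \<exists>h \<in> J G \<Gamma> D m. \<exists>g \<in> \<Gamma> (Suc m).
       x = h \<otimes>\<^bsub>G\<^esub> g \<and> a = alpha r (Suc m))"

definition shift :: "('a, 'b) monoid_scheme \<Rightarrow> 'a \<Rightarrow> ('a \<Rightarrow> 'c) \<Rightarrow> 'a \<Rightarrow> 'c" where
  "shift G g x = (\<lambda>h. x (inv\<^bsub>G\<^esub> g \<otimes>\<^bsub>G\<^esub> h))"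

definition Per :: "('a, 'b) monoid_scheme \<Rightarrow> ('a \<Rightarrow> 'c) \<Rightarrow> 'a set \<Rightarrow> 'c \<Rightarrow> 'a set" where
  "Per G x H a = {g \<in> carrier G. \<forall>\<gamma> \<in> H. x (\<gamma> \<otimes>\<^bsub>G\<^esub> g) = a}"

definition Per_all :: "('a, 'b) monoid_scheme \<Rightarrow> 'c set \<Rightarrow> ('a \<Rightarrow> 'c) \<Rightarrow> 'a set \<Rightarrow> 'a set" where
  "Per_all G \<Sigma> x H = (\<Union>a \<in> \<Sigma>. Per G x H a)"

definition group_of_periods :: "('a, 'b) monoid_scheme \<Rightarrow> 'c set \<Rightarrow> ('a \<Rightarrow> 'c) \<Rightarrow> 'a set \<Rightarrow> bool" where
  "group_of_periods G \<Sigma> x H \<longleftrightarrow>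
     subgroup H G \<and> finite (rcosets\<^bsub>G\<^esub> H) \<and> Per_all G \<Sigma> x H \<noteq> {}"

definition essential_group_of_periods :: "('a, 'b) monoid_scheme \<Rightarrow> 'c set \<Rightarrow> ('a \<Rightarrow> 'c) \<Rightarrow> 'a set \<Rightarrow> bool" where
  "essential_group_of_periods G \<Sigma> x H \<longleftrightarrow>
     group_of_periods G \<Sigma> x H \<and>
     (\<forall>g \<in> carrier G. (\<forall>a \<in> \<Sigma>. Per G x H a \<subseteq> Per G (shift G g x) H a) \<longrightarrow> g \<in> H)"

definition period_structure :: "('a, 'b) monoid_scheme \<Rightarrow> 'c set \<Rightarrow> ('a \<Rightarrow> 'c) \<Rightarrow> (nat \<Rightarrow> 'a set) \<Rightarrow> bool" where
  "period_structure G \<Sigma> x \<Gamma> \<longleftrightarrow>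
     (\<forall>n \<ge> 1. essential_group_of_periods G \<Sigma> x (\<Gamma> n)) \<and>
     (\<forall>n \<ge> 1. \<Gamma> (Suc n) \<subseteq> \<Gamma> n) \<and>
     carrier G = (\<Union>n \<in> {1..}. Per_all G \<Sigma> x (\<Gamma> n))"

end

theory Submission
  imports Defs
begin

lemma Jlist_length: "length (Jlist G \<Gamma> D m) = Suc m"
  by (induction m) auto

lemma Jlist_nth: "i \<le> m \<Longrightarrow> Jlist G \<Gamma> D m ! i = J G \<Gamma> D i"
proof (induction m arbitrary: i)
  case 0 then show ?case by (simp add: J_def)
next
  case (Suc m)
  show ?case
  proof (cases "i = Suc m")
    case True then show ?thesis by (simp add: J_def)
  next
    case False
    then have "i \<le> m" using Suc.prems by simp
    then show ?thesis using Suc.IH[of i] by (simp add: nth_append Jlist_length)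
  qed
qed

lemma J_0: "J G \<Gamma> D 0 = {\<one>\<^bsub>G\<^esub>}"
  by (simp add: J_def)

lemma J_Suc: "J G \<Gamma> D (Suc m) = D (Suc m) - (\<Union>i\<le>m. J G \<Gamma> D i <#>\<^bsub>G\<^esub> \<Gamma> (Suc i))"
proof -
  have "J G \<Gamma> D (Suc m) = D (Suc m) - (\<Union>i\<le>m. (Jlist G \<Gamma> D m ! i) <#>\<^bsub>G\<^esub> \<Gamma> (Suc i))"
    by (simp add: J_def nth_append Jlist_length)
  also have "\<dots> = D (Suc m) - (\<Union>i\<le>m. J G \<Gamma> D i <#>\<^bsub>G\<^esub> \<Gamma> (Suc i))"
    using Jlist_nth[of _ m G \<Gamma> D] by simp
  finally show ?thesis .
qed

lemma alpha_ne: "r > 1 \<Longrightarrow> alpha r (Suc n) \<noteq> alpha r (Suc (Suc n))"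
  unfolding alpha_def by (auto simp: mod_Suc split: if_splits)

lemma alpha_in: "r > 1 \<Longrightarrow> alpha r m \<in> Sigma r"
  unfolding alpha_def Sigma_def by auto

locale toep = group G for G :: "('a, 'b) monoid_scheme" (structure) +
  fixes \<Gamma> D :: "nat \<Rightarrow> 'a set" and r :: nat
  assumes r_gt: "r > 1"
    and G0: "\<Gamma> 0 = carrier G"
    and nrm: "\<And>i. \<Gamma> i \<lhd> G"
    and sdec: "\<And>i. \<Gamma> (Suc i) \<subset> \<Gamma> i"
    and D0: "D 0 = {\<one>\<^bsub>G\<^esub>}"
    and D_sub: "\<And>i. D i \<subseteq> carrier G"
    and D_tr: "\<And>i C. C \<in> rcosets\<^bsub>G\<^esub> (\<Gamma> i) \<Longrightarrow> \<exists>!d. d \<in> D i \<and> d \<in> C"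
    and D_union: "carrier G = (\<Union>i. D i)"
begin

definition B where "B i = J G \<Gamma> D i <#> \<Gamma> (Suc i)"
definition H where "H m = carrier G - (\<Union>i<m. B i)"

lemma sg: "subgroup (\<Gamma> i) G" using nrm normal_imp_subgroup by blast
lemma Gsub: "x \<in> \<Gamma> i \<Longrightarrow> x \<in> carrier G" using subgroup.subset[OF sg] by blast

lemma dec: "i \<le> j \<Longrightarrow> \<Gamma> j \<subseteq> \<Gamma> i"
proof (induction j rule: dec_induct)
  case base then show ?case by simp
next
  case (step j) then show ?case using sdec[of j] by blast
qed

lemma conj1: "x \<in> carrier G \<Longrightarrow> h \<in> \<Gamma> i \<Longrightarrow> inv x \<otimes> h \<otimes> x \<in> \<Gamma> i"
  using normal.inv_op_closed1[OF nrm] by blast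
lemma conj2: "x \<in> carrier G \<Longrightarrow> h \<in> \<Gamma> i \<Longrightarrow> x \<otimes> h \<otimes> inv x \<in> \<Gamma> i"
  using normal.inv_op_closed2[OF nrm] by blast
lemma gm: "x \<in> \<Gamma> i \<Longrightarrow> y \<in> \<Gamma> i \<Longrightarrow> x \<otimes> y \<in> \<Gamma> i"
  using subgroup.m_closed[OF sg] by blast
lemma gi: "x \<in> \<Gamma> i \<Longrightarrow> inv x \<in> \<Gamma> i"
  using subgroup.m_inv_closed[OF sg] by blast
lemma g1: "\<one> \<in> \<Gamma> i"
  using subgroup.one_closed[OF sg] by blast

lemma J_eq: "J G \<Gamma> D m = D m \<inter> H m"
proof (cases m)
  case 0 then show ?thesis using D0 by (simp add: J_0 H_def)
next
  case (Suc k)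
  have "J G \<Gamma> D (Suc k) = D (Suc k) \<inter> H (Suc k)"
    unfolding J_Suc H_def B_def using D_sub[of "Suc k"] by (auto simp: lessThan_Suc_atMost)
  then show ?thesis using Suc by simp
qed

lemma J_sub: "J G \<Gamma> D m \<subseteq> carrier G" using J_eq D_sub by blast

lemma B_mem: "x \<in> B i \<longleftrightarrow> (\<exists>j \<in> J G \<Gamma> D i. \<exists>g \<in> \<Gamma> (Suc i). x = j \<otimes> g)"
  unfolding B_def set_mult_def by auto

lemma B_sub: "B i \<subseteq> carrier G"
proof
  fix x assume "x \<in> B i"
  then obtain j g where "j \<in> J G \<Gamma> D i" "g \<in> \<Gamma> (Suc i)" "x = j \<otimes> g" using B_mem by blast
  then show "x \<in> carrier G" using J_sub Gsub by blast
qed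

lemma B_rclosed: "y \<in> B i \<Longrightarrow> \<gamma> \<in> \<Gamma> (Suc i) \<Longrightarrow> y \<otimes> \<gamma> \<in> B i"
proof -
  assume "y \<in> B i" "\<gamma> \<in> \<Gamma> (Suc i)"
  then obtain j g where j: "j \<in> J G \<Gamma> D i" "g \<in> \<Gamma> (Suc i)" "y = j \<otimes> g" using B_mem by blast
  then have "y \<otimes> \<gamma> = j \<otimes> (g \<otimes> \<gamma>)" using J_sub Gsub \<open>\<gamma> \<in> _\<close> by (simp add: m_assoc subset_iff)
  then show ?thesis using j gm \<open>\<gamma> \<in> _\<close> B_mem by blast
qed

lemma H_rclosed: "x \<in> H m \<Longrightarrow> \<gamma> \<in> \<Gamma> m \<Longrightarrow> x \<otimes> \<gamma> \<in> H m"
proof -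
  assume x: "x \<in> H m" and g: "\<gamma> \<in> \<Gamma> m"
  have xc: "x \<in> carrier G" using x H_def by blast
  have gc: "\<gamma> \<in> carrier G" using g Gsub by blast
  show ?thesis
  proof (rule ccontr)
    assume "x \<otimes> \<gamma> \<notin> H m"
    then obtain i where i: "i < m" "x \<otimes> \<gamma> \<in> B i" using xc gc H_def by auto
    have "inv \<gamma> \<in> \<Gamma> (Suc i)" using gi[OF g] dec[of "Suc i" m] i by auto
    then have "x \<otimes> \<gamma> \<otimes> inv \<gamma> \<in> B i" using B_rclosed i by blast
    then have "x \<in> B i" using xc gc by (simp add: m_assoc)
    then show False using x i H_def by blast
  qed
qed

lemma lr: "x \<in> carrier G \<Longrightarrow> \<gamma> \<in> \<Gamma> i \<Longrightarrow> \<gamma> \<otimes> x = x \<otimes> (inv x \<otimes> \<gamma> \<otimes> x) \<and> inv x \<otimes> \<gamma> \<otimes> x \<in> \<Gamma> i"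
proof -
  assume x: "x \<in> carrier G" and g: "\<gamma> \<in> \<Gamma> i"
  have gc: "\<gamma> \<in> carrier G" using g Gsub by blast
  have "x \<otimes> (inv x \<otimes> \<gamma> \<otimes> x) = (x \<otimes> inv x) \<otimes> \<gamma> \<otimes> x"
    using x gc by (simp add: m_assoc[symmetric])
  also have "\<dots> = \<gamma> \<otimes> x" using x gc by simp
  finally show ?thesis using conj1[OF x g] by simp
qed

lemma rl: "x \<in> carrier G \<Longrightarrow> \<gamma> \<in> \<Gamma> i \<Longrightarrow> x \<otimes> \<gamma> = (x \<otimes> \<gamma> \<otimes> inv x) \<otimes> x \<and> x \<otimes> \<gamma> \<otimes> inv x \<in> \<Gamma> i"
proof -
  assume x: "x \<in> carrier G" and g: "\<gamma> \<in> \<Gamma> i"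
  have gc: "\<gamma> \<in> carrier G" using g Gsub by blast
  have "(x \<otimes> \<gamma> \<otimes> inv x) \<otimes> x = x \<otimes> \<gamma> \<otimes> (inv x \<otimes> x)"
    using x gc by (simp add: m_assoc)
  also have "\<dots> = x \<otimes> \<gamma>" using x gc by simp
  finally show ?thesis using conj2[OF x g] by simp
qed

lemma B_lclosed: "y \<in> B i \<Longrightarrow> \<gamma> \<in> \<Gamma> (Suc i) \<Longrightarrow> \<gamma> \<otimes> y \<in> B i"
proof -
  assume y: "y \<in> B i" and g: "\<gamma> \<in> \<Gamma> (Suc i)"
  have "y \<in> carrier G" using y B_sub by blast
  from lr[OF this g] show ?thesis using B_rclosed[OF y] by simp
qed

lemma H_lclosed: "x \<in> H m \<Longrightarrow> \<gamma> \<in> \<Gamma> m \<Longrightarrow> \<gamma> \<otimes> x \<in> H m"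
proof -
  assume y: "x \<in> H m" and g: "\<gamma> \<in> \<Gamma> m"
  have "x \<in> carrier G" using y H_def by blast
  from lr[OF this g] show ?thesis using H_rclosed[OF y] by simp
qed


lemma D_uniq: "d \<in> D m \<Longrightarrow> j \<in> D m \<Longrightarrow> \<gamma> \<in> \<Gamma> m \<Longrightarrow> j = d \<otimes> \<gamma> \<Longrightarrow> j = d"
proof -
  assume d: "d \<in> D m" and j: "j \<in> D m" and g: "\<gamma> \<in> \<Gamma> m" and e: "j = d \<otimes> \<gamma>"
  have dc: "d \<in> carrier G" using d D_sub by blast
  have C: "\<Gamma> m #> d \<in> rcosets (\<Gamma> m)" using dc unfolding RCOSETS_def by blast
  have "d \<in> \<Gamma> m #> d" using dc g1[of m] unfolding r_coset_def by force
  moreover have "j \<in> \<Gamma> m #> d" using rl[OF dc g] e unfolding r_coset_def by force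
  ultimately show ?thesis using D_tr[OF C] d j by blast
qed

lemma rep: "x \<in> carrier G \<Longrightarrow> \<exists>d\<in>D m. \<exists>\<gamma>\<in>\<Gamma> m. x = d \<otimes> \<gamma>"
proof -
  assume x: "x \<in> carrier G"
  have C: "\<Gamma> m #> x \<in> rcosets (\<Gamma> m)" using x unfolding RCOSETS_def by blast
  then obtain d where d: "d \<in> D m" "d \<in> \<Gamma> m #> x" using D_tr by blast
  then obtain h where h: "h \<in> \<Gamma> m" "d = h \<otimes> x" unfolding r_coset_def by blast
  have hc: "h \<in> carrier G" using h Gsub by blast
  have dc: "d \<in> carrier G" using d D_sub by blast
  have "x = inv h \<otimes> d" using h hc x by (simp add: m_assoc[symmetric])
  also have "\<dots> = d \<otimes> (inv d \<otimes> inv h \<otimes> d)" using lr[OF dc gi[OF h(1)]] by simp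
  finally show ?thesis using lr[OF dc gi[OF h(1)]] d by blast
qed

lemma Hrep: "x \<in> H m \<Longrightarrow> \<exists>d\<in>J G \<Gamma> D m. \<exists>\<gamma>\<in>\<Gamma> m. x = d \<otimes> \<gamma>"
proof -
  assume x: "x \<in> H m"
  have xc: "x \<in> carrier G" using x H_def by blast
  obtain d \<gamma> where d: "d \<in> D m" "\<gamma> \<in> \<Gamma> m" "x = d \<otimes> \<gamma>" using rep[OF xc] by blast
  have dc: "d \<in> carrier G" using d D_sub by blast
  have gc: "\<gamma> \<in> carrier G" using d Gsub by blast
  have "x \<otimes> inv \<gamma> = d" using d dc gc by (simp add: m_assoc)
  then have "d \<in> H m" using H_rclosed[OF x gi[OF d(2)]] by simp
  then show ?thesis using d J_eq by blast
qed

lemma inB: "d \<in> J G \<Gamma> D m \<Longrightarrow> \<gamma> \<in> \<Gamma> m \<Longrightarrow> x = d \<otimes> \<gamma> \<Longrightarrow> (x \<in> B m \<longleftrightarrow> \<gamma> \<in> \<Gamma> (Suc m))"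
proof -
  assume d: "d \<in> J G \<Gamma> D m" and g: "\<gamma> \<in> \<Gamma> m" and x: "x = d \<otimes> \<gamma>"
  have dc: "d \<in> carrier G" using d J_sub by blast
  have gc: "\<gamma> \<in> carrier G" using g Gsub by blast
  show ?thesis
  proof
    assume "x \<in> B m"
    then obtain j g' where j: "j \<in> J G \<Gamma> D m" "g' \<in> \<Gamma> (Suc m)" "x = j \<otimes> g'" using B_mem by blast
    have g'm: "g' \<in> \<Gamma> m" using j(2) dec[of m "Suc m"] by auto
    have jc: "j \<in> carrier G" using j J_sub by blast
    have g'c: "g' \<in> carrier G" using j Gsub by blast
    have "j = d \<otimes> \<gamma> \<otimes> inv g'" using j x jc g'c by (simp add: m_assoc)
    then have "j = d \<otimes> (\<gamma> \<otimes> inv g')" using dc gc g'c by (simp add: m_assoc)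
    moreover have "\<gamma> \<otimes> inv g' \<in> \<Gamma> m" using gm[OF g gi[OF g'm]] .
    ultimately have "j = d" using D_uniq d j J_eq by blast
    then have "d \<otimes> \<gamma> = d \<otimes> g'" using x j by simp
    then have "\<gamma> = g'" using dc gc g'c by simp
    then show "\<gamma> \<in> \<Gamma> (Suc m)" using j by simp
  next
    assume "\<gamma> \<in> \<Gamma> (Suc m)"
    then show "x \<in> B m" using B_mem d x by blast
  qed
qed

lemma B_H: "B m \<subseteq> H m"
proof
  fix x assume "x \<in> B m"
  then obtain j g where j: "j \<in> J G \<Gamma> D m" "g \<in> \<Gamma> (Suc m)" "x = j \<otimes> g" using B_mem by blast
  have "g \<in> \<Gamma> m" using j(2) dec[of m "Suc m"] by auto
  then show "x \<in> H m" using H_rclosed j J_eq by blast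
qed

lemma H_Suc: "H (Suc m) = H m - B m"
  unfolding H_def by (auto simp: lessThan_Suc)

lemma B_disj: "x \<in> B i \<Longrightarrow> x \<in> B m \<Longrightarrow> i < m \<Longrightarrow> False"
  using B_H H_def by blast

lemma B_unique: "x \<in> B i \<Longrightarrow> x \<in> B m \<Longrightarrow> i = m"
  using B_disj by (metis linorder_neqE_nat)

lemma cover: "x \<in> carrier G \<Longrightarrow> \<exists>m. x \<in> B m"
proof -
  assume x: "x \<in> carrier G"
  then obtain n where n: "x \<in> D n" using D_union by blast
  show ?thesis
  proof (cases "x \<in> H n")
    case True
    then have "x \<in> J G \<Gamma> D n" using n J_eq by blast
    then have "x \<otimes> \<one> \<in> B n" using B_mem g1 by blast
    then show ?thesis using x by auto
  next
    case False then show ?thesis using x H_def by blast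
  qed
qed

lemma eta_B: "x \<in> B m \<Longrightarrow> eta G \<Gamma> D r x = alpha r (Suc m)"
  unfolding eta_def
proof (rule the_equality)
  assume "x \<in> B m"
  then show "\<exists>m'. \<exists>h\<in>J G \<Gamma> D m'. \<exists>g\<in>\<Gamma> (Suc m'). x = h \<otimes> g \<and> alpha r (Suc m) = alpha r (Suc m')"
    using B_mem by blast
next
  fix a assume x: "x \<in> B m" and "\<exists>m'. \<exists>h\<in>J G \<Gamma> D m'. \<exists>g\<in>\<Gamma> (Suc m'). x = h \<otimes> g \<and> a = alpha r (Suc m')"
  then obtain m' where "x \<in> B m'" "a = alpha r (Suc m')" using B_mem by blast
  then show "a = alpha r (Suc m)" using B_unique x by blast
qed

lemma DH1: "x \<in> H m \<Longrightarrow> \<exists>\<gamma>\<in>\<Gamma> m. x \<otimes> \<gamma> \<in> H (Suc m)"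
proof -
  assume x: "x \<in> H m"
  have xc: "x \<in> carrier G" using x H_def by blast
  obtain d \<gamma> where d: "d \<in> J G \<Gamma> D m" "\<gamma> \<in> \<Gamma> m" "x = d \<otimes> \<gamma>" using Hrep[OF x] by blast
  have dc: "d \<in> carrier G" using d J_sub by blast
  have gc: "\<gamma> \<in> carrier G" using d Gsub by blast
  show ?thesis
  proof (cases "\<gamma> \<in> \<Gamma> (Suc m)")
    case False
    then have "x \<notin> B m" using inB d by blast
    then have "x \<otimes> \<one> \<in> H (Suc m)" using x xc H_Suc by simp
    then show ?thesis using g1 by blast
  next
    case True
    obtain w where w: "w \<in> \<Gamma> m" "w \<notin> \<Gamma> (Suc m)" using sdec[of m] by blast
    have wc: "w \<in> carrier G" using w Gsub by blast
    have "\<gamma> \<otimes> w \<notin> \<Gamma> (Suc m)"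
    proof
      assume "\<gamma> \<otimes> w \<in> \<Gamma> (Suc m)"
      then have "inv \<gamma> \<otimes> (\<gamma> \<otimes> w) \<in> \<Gamma> (Suc m)" using gm gi True by blast
      then show False using w gc wc by (simp add: m_assoc[symmetric])
    qed
    moreover have "x \<otimes> w = d \<otimes> (\<gamma> \<otimes> w)" using d dc gc wc by (simp add: m_assoc)
    ultimately have "x \<otimes> w \<notin> B m" using inB d gm w by blast
    moreover have "x \<otimes> w \<in> H m" using H_rclosed x w by blast
    ultimately show ?thesis using H_Suc w by blast
  qed
qed

lemma DH: "m \<le> n \<Longrightarrow> x \<in> H m \<Longrightarrow> \<exists>\<gamma>\<in>\<Gamma> m. x \<otimes> \<gamma> \<in> H n"
proof (induction n rule: dec_induct)
  case base
  have "x \<in> carrier G" using base H_def by blast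
  then show ?case using base g1 by force
next
  case (step n)
  then obtain \<gamma> where g: "\<gamma> \<in> \<Gamma> m" "x \<otimes> \<gamma> \<in> H n" by blast
  obtain \<gamma>' where g': "\<gamma>' \<in> \<Gamma> n" "x \<otimes> \<gamma> \<otimes> \<gamma>' \<in> H (Suc n)" using DH1[OF g(2)] by blast
  have xc: "x \<in> carrier G" using step H_def by blast
  have "x \<otimes> \<gamma> \<otimes> \<gamma>' = x \<otimes> (\<gamma> \<otimes> \<gamma>')" using xc g g' Gsub by (simp add: m_assoc)
  moreover have "\<gamma> \<otimes> \<gamma>' \<in> \<Gamma> m" using gm g g' dec step(1) by blast
  ultimately show ?case using g' by metis
qed

lemma H_ne: "\<exists>x. x \<in> H m"
proof -
  have "\<one> \<in> H 0" using H_def by simp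
  then show ?thesis using DH[of 0 m] by blast
qed

lemma F1: "x \<in> B m \<Longrightarrow> m < n \<Longrightarrow> x \<in> Per G (eta G \<Gamma> D r) (\<Gamma> n) (alpha r (Suc m))"
  unfolding Per_def
proof (intro CollectI conjI ballI)
  assume x: "x \<in> B m" and mn: "m < n"
  show "x \<in> carrier G" using x B_sub by blast
  fix \<gamma> assume "\<gamma> \<in> \<Gamma> n"
  then have "\<gamma> \<in> \<Gamma> (Suc m)" using dec[of "Suc m" n] mn by auto
  then show "eta G \<Gamma> D r (\<gamma> \<otimes> x) = alpha r (Suc m)" using B_lclosed x eta_B by blast
qed

lemma F2: "y \<in> H n \<Longrightarrow> \<exists>\<gamma>\<in>\<Gamma> n. eta G \<Gamma> D r (\<gamma> \<otimes> y) \<noteq> a"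
proof -
  assume y: "y \<in> H n"
  have yc: "y \<in> carrier G" using y H_def by blast
  have R: "\<And>\<gamma> k. \<gamma> \<in> \<Gamma> n \<Longrightarrow> y \<otimes> \<gamma> \<in> B k \<Longrightarrow> \<exists>\<gamma>'\<in>\<Gamma> n. eta G \<Gamma> D r (\<gamma>' \<otimes> y) = alpha r (Suc k)"
    using rl[OF yc] eta_B by metis
  obtain d \<gamma> where d: "d \<in> J G \<Gamma> D n" "\<gamma> \<in> \<Gamma> n" "y = d \<otimes> \<gamma>" using Hrep[OF y] by blast
  have dc: "d \<in> carrier G" using d J_sub by blast
  have gc: "\<gamma> \<in> carrier G" using d Gsub by blast
  have "y \<otimes> inv \<gamma> = d" using d dc gc by (simp add: m_assoc)
  moreover have "d \<in> B n" using d(1) g1 B_mem dc by force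
  ultimately obtain \<gamma>1 where g1': "\<gamma>1 \<in> \<Gamma> n" "eta G \<Gamma> D r (\<gamma>1 \<otimes> y) = alpha r (Suc n)"
    using R[OF gi[OF d(2)]] by auto
  obtain \<gamma>' where g': "\<gamma>' \<in> \<Gamma> n" "y \<otimes> \<gamma>' \<in> H (Suc n)" using DH1[OF y] by blast
  obtain d2 \<gamma>2 where d2: "d2 \<in> J G \<Gamma> D (Suc n)" "\<gamma>2 \<in> \<Gamma> (Suc n)" "y \<otimes> \<gamma>' = d2 \<otimes> \<gamma>2"
    using Hrep[OF g'(2)] by blast
  have d2c: "d2 \<in> carrier G" using d2 J_sub by blast
  have g2c: "\<gamma>2 \<in> carrier G" using d2 Gsub by blast
  have g'c: "\<gamma>' \<in> carrier G" using g' Gsub by blast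
  have "y \<otimes> (\<gamma>' \<otimes> inv \<gamma>2) = d2" using d2 d2c g2c g'c yc by (simp add: m_assoc[symmetric]) (simp add: m_assoc)
  moreover have "d2 \<in> B (Suc n)" using d2(1) g1 B_mem d2c by force
  moreover have "\<gamma>' \<otimes> inv \<gamma>2 \<in> \<Gamma> n" using gm[OF g'(1) gi] d2(2) dec[of n "Suc n"] by auto
  ultimately obtain \<gamma>3 where g3: "\<gamma>3 \<in> \<Gamma> n" "eta G \<Gamma> D r (\<gamma>3 \<otimes> y) = alpha r (Suc (Suc n))"
    using R by metis
  show ?thesis using g1' g3 alpha_ne[OF r_gt, of n] by metis
qed


lemma essential:
  assumes g: "g \<in> carrier G"
    and P: "\<forall>a\<in>Sigma r. Per G (eta G \<Gamma> D r) (\<Gamma> n) a \<subseteq> Per G (shift G g (eta G \<Gamma> D r)) (\<Gamma> n) a"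
  shows "g \<in> \<Gamma> n"
proof -
  define k where "k = inv g"
  have kc: "k \<in> carrier G" using g k_def by simp
  have "m \<le> n \<Longrightarrow> k \<in> \<Gamma> m" for m
  proof (induction m)
    case 0 then show ?case using kc G0 by simp
  next
    case (Suc m)
    then have km: "k \<in> \<Gamma> m" and mn: "m < n" by auto
    show ?case
    proof (rule ccontr)
      assume kn: "k \<notin> \<Gamma> (Suc m)"
      obtain x0 where "x0 \<in> H m" using H_ne by blast
      then obtain d \<gamma>0 where d: "d \<in> J G \<Gamma> D m" using Hrep by blast
      have dc: "d \<in> carrier G" using d J_sub by blast
      have dB: "d \<in> B m" using d g1 B_mem dc by force
      have dH: "d \<in> H m" using d J_eq by blast
      define c where "c = inv d \<otimes> k \<otimes> d"
      have kd: "k \<otimes> d = d \<otimes> c" and cm: "c \<in> \<Gamma> m" using lr[OF dc km] c_def by auto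
      have cc: "c \<in> carrier G" using cm Gsub by blast
      have "c \<notin> \<Gamma> (Suc m)"
      proof
        assume "c \<in> \<Gamma> (Suc m)"
        then have "d \<otimes> c \<otimes> inv d \<in> \<Gamma> (Suc m)" using conj2 dc by blast
        moreover have "d \<otimes> c \<otimes> inv d = k" using kd dc kc cc
          by (metis inv_solve_right m_closed)
        ultimately show False using kn by simp
      qed
      then have "k \<otimes> d \<notin> B m" using inB[OF d cm kd] by blast
      moreover have "k \<otimes> d \<in> H m" using H_lclosed[OF dH km] .
      ultimately have "k \<otimes> d \<in> H (Suc m)" using H_Suc by blast
      then obtain \<gamma> where ga: "\<gamma> \<in> \<Gamma> (Suc m)" "k \<otimes> d \<otimes> \<gamma> \<in> H n"
        using DH[of "Suc m" n] mn by auto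
      define h where "h = d \<otimes> \<gamma>"
      have gac: "\<gamma> \<in> carrier G" using ga Gsub by blast
      have hc: "h \<in> carrier G" using h_def dc gac by simp
      have hB: "h \<in> B m" using B_rclosed dB ga h_def by blast
      define \<alpha> where "\<alpha> = alpha r (Suc m)"
      have "h \<in> Per G (eta G \<Gamma> D r) (\<Gamma> n) \<alpha>" using F1[OF hB mn] \<alpha>_def by simp
      then have "h \<in> Per G (shift G g (eta G \<Gamma> D r)) (\<Gamma> n) \<alpha>"
        using P alpha_in[OF r_gt] \<alpha>_def by blast
      then have S: "\<And>\<gamma>'. \<gamma>' \<in> \<Gamma> n \<Longrightarrow> eta G \<Gamma> D r (k \<otimes> (\<gamma>' \<otimes> h)) = \<alpha>"
        unfolding Per_def shift_def k_def by blast
      have "k \<otimes> h \<in> H n" using ga h_def kc dc gac by (simp add: m_assoc)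
      then obtain \<gamma>'' where g'': "\<gamma>'' \<in> \<Gamma> n" "eta G \<Gamma> D r (\<gamma>'' \<otimes> (k \<otimes> h)) \<noteq> \<alpha>"
        using F2 by blast
      have g''c: "\<gamma>'' \<in> carrier G" using g'' Gsub by blast
      have "k \<otimes> ((inv k \<otimes> \<gamma>'' \<otimes> k) \<otimes> h) = \<gamma>'' \<otimes> (k \<otimes> h)"
        using kc g''c hc by (simp add: m_assoc[symmetric])
      moreover have "inv k \<otimes> \<gamma>'' \<otimes> k \<in> \<Gamma> n" using conj1[OF kc g''(1)] .
      ultimately show False using S g'' by metis
    qed
  qed
  then have "k \<in> \<Gamma> n" by simp
  then have "inv k \<in> \<Gamma> n" using gi by blast
  then show ?thesis using k_def g by simp
qed

lemma Per_all_char: "Per_all G (Sigma r) (eta G \<Gamma> D r) (\<Gamma> n) = (\<Union>m<n. B m)"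
proof
  show "Per_all G (Sigma r) (eta G \<Gamma> D r) (\<Gamma> n) \<subseteq> (\<Union>m<n. B m)"
  proof
    fix x assume "x \<in> Per_all G (Sigma r) (eta G \<Gamma> D r) (\<Gamma> n)"
    then obtain a where x: "x \<in> Per G (eta G \<Gamma> D r) (\<Gamma> n) a" unfolding Per_all_def by blast
    then have xc: "x \<in> carrier G" unfolding Per_def by blast
    have "x \<notin> H n"
    proof
      assume "x \<in> H n"
      then obtain \<gamma> where "\<gamma> \<in> \<Gamma> n" "eta G \<Gamma> D r (\<gamma> \<otimes> x) \<noteq> a" using F2 by blast
      then show False using x unfolding Per_def by blast
    qed
    then show "x \<in> (\<Union>m<n. B m)" using xc H_def by blast
  qed
next
  show "(\<Union>m<n. B m) \<subseteq> Per_all G (Sigma r) (eta G \<Gamma> D r) (\<Gamma> n)"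
  proof
    fix x assume "x \<in> (\<Union>m<n. B m)"
    then obtain m where "m < n" "x \<in> B m" by blast
    then have "x \<in> Per G (eta G \<Gamma> D r) (\<Gamma> n) (alpha r (Suc m))" using F1 by blast
    moreover have "alpha r (Suc m) \<in> Sigma r" using alpha_in[OF r_gt] .
    ultimately show "x \<in> Per_all G (Sigma r) (eta G \<Gamma> D r) (\<Gamma> n)" unfolding Per_all_def by blast
  qed
qed

lemma main:
  assumes fin: "\<And>i. i \<ge> 1 \<Longrightarrow> finite (rcosets (\<Gamma> i))"
  shows "period_structure G (Sigma r) (eta G \<Gamma> D r) \<Gamma> \<and>
         (\<forall>n \<ge> 1. essential_group_of_periods G (Sigma r) (eta G \<Gamma> D r) (\<Gamma> n))"
proof -
  have E: "essential_group_of_periods G (Sigma r) (eta G \<Gamma> D r) (\<Gamma> n)" if n: "n \<ge> 1" for n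
  proof -
    have "\<one> \<otimes> \<one> \<in> B 0" using B_mem[of "\<one> \<otimes> \<one>" 0] J_0[of G \<Gamma> D] g1[of "Suc 0"] by blast
    then have "\<one> \<in> B 0" by simp
    then have "\<one> \<in> (\<Union>m<n. B m)" using n by auto
    then have "Per_all G (Sigma r) (eta G \<Gamma> D r) (\<Gamma> n) \<noteq> {}" unfolding Per_all_char by blast
    then show ?thesis unfolding essential_group_of_periods_def group_of_periods_def
      using sg[of n] fin[OF n] essential[where n=n] by blast
  qed
  have C: "carrier G = (\<Union>n \<in> {1..}. Per_all G (Sigma r) (eta G \<Gamma> D r) (\<Gamma> n))"
  proof
    show "carrier G \<subseteq> (\<Union>n \<in> {1..}. Per_all G (Sigma r) (eta G \<Gamma> D r) (\<Gamma> n))"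
    proof
      fix x assume "x \<in> carrier G"
      then obtain m where "x \<in> B m" using cover by blast
      then have "x \<in> Per_all G (Sigma r) (eta G \<Gamma> D r) (\<Gamma> (Suc m))" using Per_all_char by blast
      moreover have "Suc m \<in> {1..}" by simp
      ultimately show "x \<in> (\<Union>n \<in> {1..}. Per_all G (Sigma r) (eta G \<Gamma> D r) (\<Gamma> n))" by blast
    qed
  next
    show "(\<Union>n \<in> {1..}. Per_all G (Sigma r) (eta G \<Gamma> D r) (\<Gamma> n)) \<subseteq> carrier G"
      unfolding Per_all_def Per_def by blast
  qed
  have "\<forall>n \<ge> 1. \<Gamma> (Suc n) \<subseteq> \<Gamma> n" using sdec by blast
  then show ?thesis unfolding period_structure_def using E C by blast
qed

end

theorem proposition4p1:
  fixes G :: "('a, 'b) monoid_scheme"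
    and \<Gamma> D :: "nat \<Rightarrow> 'a set"
    and r :: nat
  assumes grp: "group G"
    and cnt: "countable (carrier G)"
    and rf: "residually_finite G"
    and r_gt: "r > 1"
    and G0: "\<Gamma> 0 = carrier G"
    and normal: "\<And>i. i \<ge> 1 \<Longrightarrow> \<Gamma> i \<lhd> G"
    and fin_idx: "\<And>i. i \<ge> 1 \<Longrightarrow> finite (rcosets\<^bsub>G\<^esub> (\<Gamma> i))"
    and strict_dec: "\<And>i. i \<ge> 1 \<Longrightarrow> \<Gamma> (Suc i) \<subset> \<Gamma> i"
    and trivial_int: "(\<Inter>i \<in> {1..}. \<Gamma> i) = {\<one>\<^bsub>G\<^esub>}"
    and D0: "D 0 = {\<one>\<^bsub>G\<^esub>}"
    and D_sub: "\<And>i. D i \<subseteq> carrier G"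
    and D_fin: "\<And>i. finite (D i)"
    and D_transversal: "\<And>i C. C \<in> rcosets\<^bsub>G\<^esub> (\<Gamma> i) \<Longrightarrow> \<exists>!d. d \<in> D i \<and> d \<in> C"
    and D_one: "\<And>i. \<one>\<^bsub>G\<^esub> \<in> D i"
    and D_mono: "\<And>i. D i \<subseteq> D (Suc i)"
    and D_union: "carrier G = (\<Union>i. D i)"
    and D_struct: "\<And>i j. 1 \<le> i \<Longrightarrow> i < j \<Longrightarrow>
                     D j = (\<Union>v \<in> D j \<inter> \<Gamma> i. v <#\<^bsub>G\<^esub> D i)"
    and idx_G: "\<And>i. i \<ge> 1 \<Longrightarrow> card (rcosets\<^bsub>G\<^esub> (\<Gamma> i)) \<ge> 3"
    and idx_step: "\<And>i. i \<ge> 1 \<Longrightarrow>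
                     card (rcosets\<^bsub>G\<lparr>carrier := \<Gamma> i\<rparr>\<^esub> (\<Gamma> (Suc i))) \<ge> 3"
  shows "period_structure G (Sigma r) (eta G \<Gamma> D r) \<Gamma> \<and>
         (\<forall>n \<ge> 1. essential_group_of_periods G (Sigma r) (eta G \<Gamma> D r) (\<Gamma> n))"
proof -
  interpret group G by (rule grp)
  have nrm': "\<Gamma> i \<lhd> G" for i
    using normal G0 normal_self by (cases "i = 0") auto
  have "\<Gamma> 1 \<noteq> carrier G"
  proof
    assume e: "\<Gamma> 1 = carrier G"
    have "rcosets\<^bsub>G\<^esub> (carrier G) = {carrier G}"
    proof -
      have "carrier G #>\<^bsub>G\<^esub> x = carrier G" if "x \<in> carrier G" for x
        using subgroup.rcos_const[OF subgroup_self grp] that by blast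
      then show ?thesis unfolding RCOSETS_def by auto
    qed
    then show False using idx_G[of 1] e by simp
  qed
  then have s1: "\<Gamma> 1 \<subset> \<Gamma> 0" using G0 normal_imp_subgroup[OF nrm'[of 1]] subgroup.subset by blast
  have sdec': "\<Gamma> (Suc i) \<subset> \<Gamma> i" for i
    using s1 strict_dec by (cases "i = 0") auto
  interpret T: toep G \<Gamma> D r
    apply (intro toep.intro[OF grp] toep_axioms.intro)
    using r_gt G0 nrm' sdec' D0 D_sub D_transversal D_union by blast+
  show ?thesis using T.main fin_idx by blast
qed

end
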